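(* Let $\mathcal{A}$ be a complex Banach algebra with identity, let $a\in\mathcal{A}$ and let $(a_n)$ be a sequence in $\mathcal{A}$ such that $a_na=aa_n$ and $a_na_m=a_ma_n$ for all $n,m\in\mathbb{N}$. If $a_n\overset{\nu}{\to}a$ and $0$ is an accumulation point of $\sigma(a)$, then $\sigma(a_n)\to\sigma(a)$ in the Hausdorff metric.
   Context: $\sigma(x)$ denotes the spectrum of $x$ in $\mathcal{A}$. A sequence $(x_n)$ in $\mathcal{A}$ is $\nu$-convergent to $x$, written $x_n\overset{\nu}{\to}x$, if $(\|x_n\|)$ is bounded, $\|(x_n-x)x\|\to0$ and $\|(x_n-x)x_n\|\to0$. Convergence of spectra is with respect to the Hausdorff metric on nonempty compact subsets of $\mathbb{C}$. *)

theory Defs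
  imports "HOL-Analysis.Analysis"
begin

class scaleC =
  fixes scaleC :: "complex \<Rightarrow> 'a \<Rightarrow> 'a"  (infixr \<open>*\<^sub>C\<close> 75)

class complex_banach_algebra_1 = real_normed_algebra_1 + banach + scaleC +
  assumes scaleR_scaleC: "scaleR r x = scaleC (complex_of_real r) x"
    and scaleC_add_right: "scaleC c (x + y) = scaleC c x + scaleC c y"
    and scaleC_add_left: "scaleC (c + d) x = scaleC c x + scaleC d x"
    and scaleC_scaleC: "scaleC c (scaleC d x) = scaleC (c * d) x"
    and scaleC_one: "scaleC 1 x = x"
    and norm_scaleC: "norm (scaleC c x) = cmod c * norm x"
    and mult_scaleC_left: "scaleC c x * y = scaleC c (x * y)"
    and mult_scaleC_right: "x * scaleC c y = scaleC c (x * y)"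

definition invertible_elem :: "'a::complex_banach_algebra_1 \<Rightarrow> bool" where
  "invertible_elem x \<longleftrightarrow> (\<exists>y. x * y = 1 \<and> y * x = 1)"

definition spectrum :: "'a::complex_banach_algebra_1 \<Rightarrow> complex set" where
  "spectrum x = {l. \<not> invertible_elem (x - scaleC l 1)}"

definition nu_conv :: "(nat \<Rightarrow> 'a::complex_banach_algebra_1) \<Rightarrow> 'a \<Rightarrow> bool" where
  "nu_conv xs x \<longleftrightarrow> bounded (range (\<lambda>n. norm (xs n))) \<and>
     (\<lambda>n. norm ((xs n - x) * x)) \<longlonglongrightarrow> 0 \<and>
     (\<lambda>n. norm ((xs n - x) * xs n)) \<longlonglongrightarrow> 0"

definition hausdorff_dist :: "complex set \<Rightarrow> complex set \<Rightarrow> real" where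
  "hausdorff_dist S T = max (SUP x\<in>S. infdist x T) (SUP y\<in>T. infdist y S)"

end

theory Submission
  imports Defs
begin

lemma scaleC_zero_left[simp]: "scaleC 0 (x::'a::complex_banach_algebra_1) = 0"
  using scaleR_scaleC[of 0 x] by simp
lemma scaleC_zero_right[simp]: "scaleC c (0::'a::complex_banach_algebra_1) = 0"
  using scaleC_add_right[of c 0 0] by simp
lemma scaleC_minus_left: "scaleC (- c) (x::'a::complex_banach_algebra_1) = - scaleC c x"
  using scaleC_add_left[of "-c" c x] by (simp add: eq_neg_iff_add_eq_0)
lemma scaleC_minus_right: "scaleC c (- x::'a::complex_banach_algebra_1) = - scaleC c x"
  using scaleC_add_right[of c "-x" x] by (simp add: eq_neg_iff_add_eq_0)
lemma scaleC_diff_left: "scaleC (c - d) (x::'a::complex_banach_algebra_1) = scaleC c x - scaleC d x"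
  using scaleC_add_left[of c "-d" x] by (simp add: scaleC_minus_left)
lemma scaleC_diff_right: "scaleC c (x - y::'a::complex_banach_algebra_1) = scaleC c x - scaleC c y"
  using scaleC_add_right[of c x "-y"] by (simp add: scaleC_minus_right)
lemma scaleC_power: "(scaleC c (x::'a::complex_banach_algebra_1)) ^ n = scaleC (c ^ n) (x ^ n)"
  by (induct n) (simp_all add: scaleC_one mult_scaleC_left mult_scaleC_right scaleC_scaleC mult.commute)
lemma scaleC_one_comm: "scaleC c 1 * x = x * scaleC c (1::'a::complex_banach_algebra_1)"
  by (simp add: mult_scaleC_left mult_scaleC_right)

lemma comm_power: fixes u v :: "'a::ring_1" assumes "u * v = v * u" shows "u ^ n * v = v * u ^ n"
proof (induct n)
  case (Suc n) then show ?case by (metis assms mult.assoc power_Suc)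
qed simp

lemma comm_power_mult: fixes u v :: "'a::ring_1" assumes "u * v = v * u" shows "(u * v) ^ n = u ^ n * v ^ n"
proof (induct n)
  case (Suc n)
  have "(u * v) ^ Suc n = u * v * (u ^ n * v ^ n)" using Suc by simp
  also have "\<dots> = u * (v * u ^ n) * v ^ n" by (simp add: mult.assoc)
  also have "\<dots> = u * (u ^ n * v) * v ^ n" using comm_power[OF assms, of n] by simp
  finally show ?case by (simp add: mult.assoc)
qed simp

definition binv :: "'a::complex_banach_algebra_1 \<Rightarrow> 'a" where
  "binv u = (SOME v. u * v = 1 \<and> v * u = 1)"

lemma binv: "invertible_elem u \<Longrightarrow> u * binv u = 1 \<and> binv u * u = 1"
  unfolding invertible_elem_def binv_def by (rule someI_ex)

lemma inv_unique: fixes u :: "'a::complex_banach_algebra_1"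
  assumes "u * v = 1" "w * u = 1" shows "v = w"
proof -
  have "v = (w * u) * v" using assms(2) by simp
  also have "\<dots> = w * (u * v)" by (simp only: mult.assoc)
  also have "\<dots> = w" using assms(1) by simp
  finally show ?thesis .
qed

lemma invertibleI: fixes u :: "'a::complex_banach_algebra_1"
  assumes "u * v = 1" "w * u = 1" shows "invertible_elem u"
  using inv_unique[OF assms] assms unfolding invertible_elem_def by blast

lemma binv_eq: fixes u :: "'a::complex_banach_algebra_1"
  assumes "u * v = 1" "v * u = 1" shows "binv u = v"
  using binv[of u] assms invertibleI inv_unique by metis

lemma invertible_mult: fixes u :: "'a::complex_banach_algebra_1"
  assumes "invertible_elem u" "invertible_elem v" shows "invertible_elem (u * v)"
proof -
  have "(u * v) * (binv v * binv u) = 1"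
    by (metis assms binv mult.assoc mult_1_left)
  moreover have "(binv v * binv u) * (u * v) = 1"
    by (metis assms binv mult.assoc mult_1_left)
  ultimately show ?thesis using invertibleI by blast
qed

lemma binv_comm: fixes u :: "'a::complex_banach_algebra_1"
  assumes "invertible_elem u" "u * v = v * u" shows "binv u * v = v * binv u"
proof -
  have "binv u * v = binv u * v * (u * binv u)" using binv[OF assms(1)] by simp
  also have "\<dots> = binv u * (u * v) * binv u" by (simp add: assms(2) mult.assoc)
  also have "\<dots> = v * binv u" using binv[OF assms(1)] by (simp add: mult.assoc[symmetric])
  finally show ?thesis .
qed

lemma neumann: fixes w :: "'a::complex_banach_algebra_1"
  assumes "norm w < 1" shows "invertible_elem (1 - w)"
proof -
  have sw: "summable (\<lambda>k. w ^ k)"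
    by (rule summable_comparison_test'[where g="\<lambda>k. norm w ^ k" and N=0])
       (use assms in \<open>simp_all add: summable_geometric norm_power_ineq\<close>)
  define S where "S = (\<Sum>k. w ^ k)"
  have h: "(\<Sum>k. w ^ Suc k) = S - 1" using suminf_split_head[OF sw] by (simp add: S_def)
  have "w * S = (\<Sum>k. w * w ^ k)" using suminf_mult[OF sw] by (simp add: S_def)
  also have "\<dots> = S - 1" using h by simp
  finally have 1: "(1 - w) * S = 1" by (simp add: left_diff_distrib)
  have "S * w = (\<Sum>k. w ^ k * w)" using suminf_mult2[OF sw] by (simp add: S_def)
  also have "\<dots> = S - 1" using h by (simp add: power_commutes)
  finally have 2: "S * (1 - w) = 1" by (simp add: right_diff_distrib)
  show ?thesis using 1 2 invertibleI by blast
qed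

lemma geom_telescope: fixes z :: "'a::ring_1"
  shows "(1 - z) * (\<Sum>k<N. z ^ k) = 1 - z ^ N" "(\<Sum>k<N. z ^ k) * (1 - z) = 1 - z ^ N"
proof -
  show "(1 - z) * (\<Sum>k<N. z ^ k) = 1 - z ^ N"
  proof (induct N)
    case (Suc N)
    have "(1 - z) * (\<Sum>k<Suc N. z ^ k) = (1 - z) * (\<Sum>k<N. z ^ k) + (1 - z) * z ^ N"
      by (simp add: distrib_left)
    also have "\<dots> = 1 - z ^ N + (z ^ N - z * z ^ N)" using Suc by (simp add: left_diff_distrib)
    finally show ?case by simp
  qed simp
  show "(\<Sum>k<N. z ^ k) * (1 - z) = 1 - z ^ N"
  proof (induct N)
    case (Suc N)
    have "(\<Sum>k<Suc N. z ^ k) * (1 - z) = (\<Sum>k<N. z ^ k) * (1 - z) + z ^ N * (1 - z)"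
      by (simp add: distrib_right)
    also have "\<dots> = 1 - z ^ N + (z ^ N - z * z ^ N)" using Suc by (simp add: right_diff_distrib power_commutes)
    finally show ?case by simp
  qed simp
qed

lemma neumann_power: fixes w :: "'a::complex_banach_algebra_1"
  assumes "norm (w ^ N) < 1" shows "invertible_elem (1 + w)"
proof -
  let ?z = "- w"
  let ?G = "\<Sum>k<N. ?z ^ k"
  have "norm (?z ^ N) < 1" using assms by (cases "even N") (simp_all add: power_minus' norm_minus_cancel)
  hence Q: "invertible_elem (1 - ?z ^ N)" by (rule neumann)
  have e: "1 - ?z = 1 + w" by simp
  have 1: "(1 + w) * ?G = 1 - ?z ^ N" "?G * (1 + w) = 1 - ?z ^ N"
    using geom_telescope[of ?z N] e by metis+
  have "(1 + w) * (?G * binv (1 - ?z ^ N)) = 1"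
    using 1 binv[OF Q] by (metis mult.assoc)
  moreover have "(binv (1 - ?z ^ N) * ?G) * (1 + w) = 1"
    using 1 binv[OF Q] by (metis mult.assoc)
  ultimately show ?thesis using invertibleI by blast
qed


lemma resolvent_id: fixes y :: "'a::complex_banach_algebra_1"
  assumes "invertible_elem (1 - \<nu> *\<^sub>C y)" "invertible_elem (1 - \<mu> *\<^sub>C y)"
  shows "binv (1 - \<nu> *\<^sub>C y) - binv (1 - \<mu> *\<^sub>C y)
       = (\<nu> - \<mu>) *\<^sub>C (binv (1 - \<nu> *\<^sub>C y) * y * binv (1 - \<mu> *\<^sub>C y))"
proof -
  define A where "A = 1 - \<nu> *\<^sub>C y"
  define B where "B = 1 - \<mu> *\<^sub>C y"
  define a where "a = binv A"
  define b where "b = binv B"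
  have aA: "a * A = 1" using binv[OF assms(1)] by (simp add: a_def A_def)
  have Bb: "B * b = 1" using binv[OF assms(2)] by (simp add: b_def B_def)
  have "a - b = a * (B * b) - (a * A) * b" using aA Bb by simp
  also have "\<dots> = a * (B - A) * b" by (simp add: algebra_simps)
  also have "B - A = (\<nu> - \<mu>) *\<^sub>C y" by (simp add: A_def B_def scaleC_diff_left)
  finally have "a - b = a * ((\<nu> - \<mu>) *\<^sub>C y) * b" .
  thus ?thesis by (simp add: a_def b_def A_def B_def mult_scaleC_left mult_scaleC_right)
qed

lemma resolvent_cont: fixes y :: "'a::complex_banach_algebra_1"
  assumes H: "\<forall>\<nu>\<in>D. invertible_elem (1 - \<nu> *\<^sub>C y)"
  shows "continuous_on D (\<lambda>\<nu>. binv (1 - \<nu> *\<^sub>C y))"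
  unfolding continuous_on_iff
proof (intro ballI allI impI)
  fix \<mu> and e :: real assume \<mu>: "\<mu> \<in> D" and e: "e > 0"
  let ?R = "\<lambda>\<nu>. binv (1 - \<nu> *\<^sub>C y)"
  define M where "M = norm (?R \<mu>)"
  define Y where "Y = norm y"
  have M0: "M \<ge> 0" "Y \<ge> 0" by (simp_all add: M_def Y_def)
  define K where "K = 2 * M * M * Y + 1"
  define r where "r = 1 / (2 * (Y * M + 1))"
  have "0 \<le> 2 * M * M * Y" using M0 by simp
  hence K0: "K > 0" by (simp add: K_def)
  have r0: "r > 0" using M0 by (simp add: r_def add_nonneg_pos)
  show "\<exists>d>0. \<forall>x'\<in>D. dist x' \<mu> < d \<longrightarrow> dist (?R x') (?R \<mu>) < e"
  proof (intro exI[of _ "min r (e / K)"] conjI ballI impI)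
    show "min r (e / K) > 0" using r0 K0 e by simp
    fix \<nu> assume \<nu>: "\<nu> \<in> D" and d: "dist \<nu> \<mu> < min r (e / K)"
    let ?c = "cmod (\<nu> - \<mu>)"
    have c: "?c < r" "?c < e / K" using d by (simp_all add: dist_norm)
    have E: "?R \<nu> - ?R \<mu> = (\<nu> - \<mu>) *\<^sub>C (?R \<nu> * y * ?R \<mu>)"
      using resolvent_id H \<mu> \<nu> by blast
    have nE: "norm (?R \<nu> - ?R \<mu>) \<le> ?c * (norm (?R \<nu>) * Y * M)"
    proof -
      have "norm (?R \<nu> - ?R \<mu>) = ?c * norm (?R \<nu> * y * ?R \<mu>)" using E by (simp add: norm_scaleC)
      also have "norm (?R \<nu> * y * ?R \<mu>) \<le> norm (?R \<nu>) * Y * M"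
        unfolding Y_def M_def by (metis mult_right_mono norm_ge_zero norm_mult_ineq order_trans)
      finally show ?thesis by (simp add: mult_left_mono)
    qed
    have cYM: "?c * Y * M \<le> 1/2"
    proof -
      have "?c * (Y * M) \<le> r * (Y * M)" using c M0 by (intro mult_right_mono) auto
      also have "\<dots> \<le> 1/2"
      proof -
        have t: "0 \<le> Y * M" using M0 by simp
        have "r * (Y * M) = (Y * M) / (2 * (Y * M + 1))" by (simp add: r_def)
        also have "\<dots> \<le> 1/2" using t by (simp add: divide_le_eq)
        finally show ?thesis .
      qed
      finally show ?thesis by (simp add: mult.assoc)
    qed
    have "norm (?R \<nu>) \<le> M + norm (?R \<nu> - ?R \<mu>)"
      unfolding M_def by (metis add.commute diff_add_cancel norm_triangle_ineq)
    also have "\<dots> \<le> M + norm (?R \<nu>) * (?c * Y * M)" using nE by (simp add: algebra_simps)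
    also have "\<dots> \<le> M + norm (?R \<nu>) * (1/2)" using cYM by (intro add_left_mono mult_left_mono) auto
    finally have bR: "norm (?R \<nu>) \<le> 2 * M" by simp
    have "dist (?R \<nu>) (?R \<mu>) \<le> ?c * (norm (?R \<nu>) * Y * M)" using nE by (simp add: dist_norm)
    also have "\<dots> \<le> ?c * (2 * M * Y * M)" using bR M0
      by (intro mult_left_mono mult_right_mono) auto
    also have "\<dots> \<le> ?c * K" by (intro mult_left_mono) (auto simp: K_def algebra_simps)
    also have "\<dots> < (e / K) * K" using c K0 by (intro mult_strict_right_mono) auto
    also have "\<dots> = e" using K0 by simp
    finally show "dist (?R \<nu>) (?R \<mu>) < e" .
  qed
qed

lemma avg_step: fixes W :: "'a::complex_banach_algebra_1"
  assumes "invertible_elem (1 - W)" "invertible_elem (1 + W)"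
  shows "invertible_elem (1 - W * W) \<and> binv (1 - W * W) = (1/2) *\<^sub>R (binv (1 - W) + binv (1 + W))"
proof -
  define a where "a = binv (1 - W)"
  define b where "b = binv (1 + W)"
  have a: "(1 - W) * a = 1" "a * (1 - W) = 1" using binv[OF assms(1)] by (simp_all add: a_def)
  have b: "(1 + W) * b = 1" "b * (1 + W) = 1" using binv[OF assms(2)] by (simp_all add: b_def)
  have AB: "1 - W * W = (1 - W) * (1 + W)" "1 - W * W = (1 + W) * (1 - W)" by (simp_all add: algebra_simps)
  have 1: "(1 - W * W) * (a + b) = 1 + 1"
  proof -
    have "(1 - W * W) * (a + b) = (1 - W * W) * a + (1 - W * W) * b" by (rule distrib_left)
    also have "\<dots> = ((1 + W) * (1 - W)) * a + ((1 - W) * (1 + W)) * b" using AB by metis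
    also have "\<dots> = (1 + W) * ((1 - W) * a) + (1 - W) * ((1 + W) * b)" by (simp only: mult.assoc)
    also have "\<dots> = 1 + 1" using a b by simp
    finally show ?thesis .
  qed
  have 2: "(a + b) * (1 - W * W) = 1 + 1"
  proof -
    have "(a + b) * (1 - W * W) = (a * (1 - W)) * (1 + W) + (b * (1 + W)) * (1 - W)"
      using AB by (metis distrib_right mult.assoc)
    also have "\<dots> = 1 + 1" using a b by simp
    finally show ?thesis .
  qed
  have "(1/2::real) *\<^sub>R ((1::'a) + 1) = ((1/2) + (1/2)::real) *\<^sub>R (1::'a)"
    by (simp only: scaleR_add_right scaleR_add_left)
  hence 11: "(1/2::real) *\<^sub>R ((1::'a) + 1) = 1" by simp
  have r: "(1 - W * W) * ((1/2) *\<^sub>R (a + b)) = 1" using 1 11 by (simp add: mult_scaleR_right)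
  have l: "((1/2) *\<^sub>R (a + b)) * (1 - W * W) = 1" using 2 11 by (simp add: mult_scaleR_left)
  show ?thesis using r l invertibleI binv_eq unfolding a_def b_def by metis
qed


lemma inv_near_one: fixes U :: "'a::complex_banach_algebra_1"
  assumes "invertible_elem (1 - U)" "norm U \<le> 1/8"
  shows "norm (binv (1 - U) - 1) \<le> 1/7"
proof -
  define V where "V = binv (1 - U)"
  have "(1 - U) * V = 1" using binv[OF assms(1)] by (simp add: V_def)
  hence e: "V - 1 = U * V" by (simp add: algebra_simps)
  have nV: "norm V \<le> 1 + norm (V - 1)" by (metis add.commute diff_add_cancel norm_one norm_triangle_ineq)
  have "norm (V - 1) \<le> norm U * norm V" using e by (simp add: norm_mult_ineq)
  also have "\<dots> \<le> (1/8) * (1 + norm (V - 1))" using assms(2) nV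
    by (intro mult_mono) auto
  finally show ?thesis by (simp add: V_def)
qed

lemma small_from_inv: fixes U :: "'a::complex_banach_algebra_1"
  assumes "invertible_elem (1 - U)" "norm (binv (1 - U) - 1) < 1/2"
  shows "norm U < 1"
proof -
  define V where "V = binv (1 - U)"
  have "V * (1 - U) = 1" using binv[OF assms(1)] by (simp add: V_def)
  hence e: "U = (V - 1) * (1 - U)" by (simp add: algebra_simps)
  have "norm U \<le> norm (V - 1) * norm (1 - U)" using e by (metis norm_mult_ineq)
  also have "\<dots> \<le> norm (V - 1) * (1 + norm U)"
    by (intro mult_left_mono) (auto intro: order_trans[OF norm_triangle_ineq4])
  also have "\<dots> < (1/2) * (1 + norm U)" using assms(2) unfolding V_def
    by (intro mult_strict_right_mono) (auto simp: add_pos_nonneg)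
  finally show ?thesis by simp
qed

definition UU :: "'a::complex_banach_algebra_1 \<Rightarrow> nat \<Rightarrow> complex \<Rightarrow> 'a" where
  "UU y m \<nu> = (\<nu> ^ (2 ^ m)) *\<^sub>C (y ^ (2 ^ m))"

lemma UU_sq: "UU y m \<nu> * UU y m \<nu> = UU y (Suc m) \<nu>"
proof -
  have "UU y m \<nu> * UU y m \<nu> = (\<nu> ^ (2 ^ m) * \<nu> ^ (2 ^ m)) *\<^sub>C (y ^ (2 ^ m) * y ^ (2 ^ m))"
    by (simp add: UU_def mult_scaleC_left mult_scaleC_right scaleC_scaleC mult.commute)
  also have "\<dots> = UU y (Suc m) \<nu>" by (simp add: UU_def power_add[symmetric] mult_2)
  finally show ?thesis .
qed

lemma UU_pow: "UU y (m + k) \<nu> = (UU y m \<nu>) ^ (2 ^ k)"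
  by (simp add: UU_def scaleC_power power_mult[symmetric] power_add)

lemma UU_rot: "UU y m (cis (pi / 2 ^ m) * \<nu>) = - UU y m \<nu>"
proof -
  have "cis (pi / 2 ^ m) ^ (2 ^ m) = cis (real (2 ^ m) * (pi / 2 ^ m))" by (rule Complex.DeMoivre)
  also have "real (2 ^ m) * (pi / 2 ^ m) = pi" by simp
  finally have "cis (pi / 2 ^ m) ^ (2 ^ m) = -1" by simp
  thus ?thesis by (simp add: UU_def power_mult_distrib scaleC_minus_left)
qed

lemma key_lemma: fixes y :: "'a::complex_banach_algebra_1"
  assumes H: "\<forall>\<nu>. cmod \<nu> \<le> 1 \<longrightarrow> invertible_elem (1 - \<nu> *\<^sub>C y)"
  shows "\<exists>m. norm (y ^ (2 ^ m)) < 1"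
proof -
  define D where "D = cball (0::complex) 1"
  have HD: "\<forall>\<nu>\<in>D. invertible_elem (1 - \<nu> *\<^sub>C y)" using H by (simp add: D_def)
  have "uniformly_continuous_on D (\<lambda>\<nu>. binv (1 - \<nu> *\<^sub>C y))"
    by (rule compact_uniformly_continuous[OF resolvent_cont[OF HD]]) (simp add: D_def)
  then obtain \<delta> where \<delta>: "\<delta> > 0"
    "\<forall>\<nu>\<in>D. \<forall>\<nu>'\<in>D. dist \<nu>' \<nu> < \<delta> \<longrightarrow> dist (binv (1 - \<nu>' *\<^sub>C y)) (binv (1 - \<nu> *\<^sub>C y)) < 1/8"
    unfolding uniformly_continuous_on_def by (meson zero_less_divide_1_iff zero_less_numeral)
  have I: "(\<forall>\<nu>\<in>D. invertible_elem (1 - UU y m \<nu>)) \<and>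
     (\<forall>\<nu>\<in>D. \<forall>\<nu>'\<in>D. dist \<nu>' \<nu> < \<delta> \<longrightarrow> dist (binv (1 - UU y m \<nu>')) (binv (1 - UU y m \<nu>)) < 1/8)" for m
  proof (induct m)
    case 0
    then show ?case using HD \<delta>(2) by (simp add: UU_def)
  next
    case (Suc m)
    define \<omega> where "\<omega> = cis (pi / 2 ^ m)"
    have \<omega>D: "\<omega> * \<nu> \<in> D" if "\<nu> \<in> D" for \<nu> using that by (simp add: D_def \<omega>_def norm_mult)
    have rot: "UU y m (\<omega> * \<nu>) = - UU y m \<nu>" for \<nu> by (simp add: \<omega>_def UU_rot)
    have st: "invertible_elem (1 - UU y (Suc m) \<nu>) \<and>
      binv (1 - UU y (Suc m) \<nu>) = (1/2) *\<^sub>R (binv (1 - UU y m \<nu>) + binv (1 - UU y m (\<omega> * \<nu>)))"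
      if "\<nu> \<in> D" for \<nu>
    proof -
      have i1: "invertible_elem (1 - UU y m \<nu>)" using Suc that by blast
      have "invertible_elem (1 - UU y m (\<omega> * \<nu>))" using Suc \<omega>D[OF that] by blast
      hence i2: "invertible_elem (1 + UU y m \<nu>)" using rot[of \<nu>] by simp
      show ?thesis using avg_step[OF i1 i2] rot[of \<nu>] by (simp add: UU_sq)
    qed
    show ?case
    proof (intro conjI ballI impI)
      fix \<nu> assume "\<nu> \<in> D" thus "invertible_elem (1 - UU y (Suc m) \<nu>)" using st by blast
    next
      fix \<nu> \<nu>' assume a: "\<nu> \<in> D" "\<nu>' \<in> D" "dist \<nu>' \<nu> < \<delta>"
      have d2: "dist (\<omega> * \<nu>') (\<omega> * \<nu>) < \<delta>" using a(3)
        by (simp add: dist_norm \<omega>_def right_diff_distrib[symmetric] norm_mult)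
      have h1: "norm (binv (1 - UU y m \<nu>') - binv (1 - UU y m \<nu>)) < 1/8"
        using Suc a by (simp add: dist_norm)
      have h2: "norm (binv (1 - UU y m (\<omega> * \<nu>')) - binv (1 - UU y m (\<omega> * \<nu>))) < 1/8"
        using Suc a d2 \<omega>D by (simp add: dist_norm)
      have "binv (1 - UU y (Suc m) \<nu>') - binv (1 - UU y (Suc m) \<nu>) =
        (1/2) *\<^sub>R ((binv (1 - UU y m \<nu>') - binv (1 - UU y m \<nu>)) +
                   (binv (1 - UU y m (\<omega> * \<nu>')) - binv (1 - UU y m (\<omega> * \<nu>))))"
        using st[OF a(1)] st[OF a(2)] by (simp add: algebra_simps)
      hence "dist (binv (1 - UU y (Suc m) \<nu>')) (binv (1 - UU y (Suc m) \<nu>)) \<le>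
         (1/2) * (norm (binv (1 - UU y m \<nu>') - binv (1 - UU y m \<nu>)) +
                  norm (binv (1 - UU y m (\<omega> * \<nu>')) - binv (1 - UU y m (\<omega> * \<nu>))))"
        by (simp add: dist_norm norm_triangle_ineq)
      also have "\<dots> < 1/8" using h1 h2 by simp
      finally show "dist (binv (1 - UU y (Suc m) \<nu>')) (binv (1 - UU y (Suc m) \<nu>)) < 1/8" .
    qed
  qed
  define Q where "Q s \<longleftrightarrow> (\<exists>m. norm (UU y m (complex_of_real s)) < 1)" for s
  have decay: "\<exists>m. norm (UU y m z) \<le> 1/8" if "norm (UU y m0 z) < 1" for z m0
  proof -
    define q where "q = norm (UU y m0 z)"
    have q: "0 \<le> q" "q < 1" using that by (simp_all add: q_def)
    obtain k where k: "q ^ k < 1/8" using real_arch_pow_inv[OF _ q(2), of "1/8"] by auto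
    have "norm (UU y (m0 + k) z) \<le> q ^ (2 ^ k)" unfolding UU_pow q_def by (rule norm_power_ineq)
    also have "\<dots> \<le> q ^ k" using q by (intro power_decreasing) (auto intro: less_imp_le)
    finally show ?thesis using k by (intro exI[of _ "m0 + k"]) simp
  qed
  have boot: "Q s" if s: "0 \<le> s" "s \<le> 1" "0 \<le> s'" "s' \<le> 1" "\<bar>s - s'\<bar> < \<delta>" "Q s'" for s s'
  proof -
    obtain m0 where "norm (UU y m0 (complex_of_real s')) < 1" using s(6) by (auto simp: Q_def)
    then obtain m where m: "norm (UU y m (complex_of_real s')) \<le> 1/8" using decay by blast
    have D: "complex_of_real s \<in> D" "complex_of_real s' \<in> D" using s by (simp_all add: D_def)
    have inv: "invertible_elem (1 - UU y m (complex_of_real s))" "invertible_elem (1 - UU y m (complex_of_real s'))"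
      using I D by blast+
    have n1: "norm (binv (1 - UU y m (complex_of_real s')) - 1) \<le> 1/7" using inv_near_one[OF inv(2) m] .
    have n2: "norm (binv (1 - UU y m (complex_of_real s)) - binv (1 - UU y m (complex_of_real s'))) < 1/8"
    proof -
      have "dist (complex_of_real s) (complex_of_real s') < \<delta>" using s(5) by (simp add: dist_real_def)
      thus ?thesis using I D by (metis dist_norm)
    qed
    have "norm (binv (1 - UU y m (complex_of_real s)) - 1) \<le>
      norm (binv (1 - UU y m (complex_of_real s)) - binv (1 - UU y m (complex_of_real s'))) +
      norm (binv (1 - UU y m (complex_of_real s')) - 1)"
      using norm_triangle_ineq[of "binv (1 - UU y m (complex_of_real s)) - binv (1 - UU y m (complex_of_real s'))"
           "binv (1 - UU y m (complex_of_real s')) - 1"] by simp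
    also have "\<dots> < 1/2" using n1 n2 by simp
    finally have "norm (UU y m (complex_of_real s)) < 1" using small_from_inv[OF inv(1)] by simp
    thus ?thesis by (auto simp: Q_def)
  qed
  have chain: "Q (min 1 (real k * \<delta> / 2))" for k
  proof (induct k)
    case 0
    have "UU y 0 (complex_of_real 0) = 0" by (simp add: UU_def)
    then show ?case by (auto simp: Q_def intro!: exI[of _ 0])
  next
    case (Suc k)
    define a where "a = real k * \<delta> / 2"
    have a0: "0 \<le> a" using \<delta>(1) by (simp add: a_def)
    have e: "real (Suc k) * \<delta> / 2 = a + \<delta> / 2" by (simp add: a_def distrib_right add_divide_distrib)
    have "Q (min 1 (a + \<delta> / 2))"
      by (rule boot[OF _ _ _ _ _ Suc[folded a_def]]) (use \<delta>(1) a0 in \<open>auto simp: min_def\<close>)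
    thus ?case using e by (simp only:)
  qed
  obtain k :: nat where k: "2 / \<delta> \<le> k" using real_arch_simple by blast
  hence "1 \<le> real k * \<delta> / 2" using \<delta>(1) by (simp add: field_simps)
  hence "Q 1" using chain[of k] by (simp add: min_def)
  thus ?thesis by (auto simp: Q_def UU_def scaleC_one)
qed


lemma spec_incl: fixes x y :: "'a::complex_banach_algebra_1"
  assumes xy: "x * y = y * x" and l: "l \<in> spectrum y"
  shows "spectrum x \<noteq> {} \<and> infdist l (spectrum x) \<le> sqrt (norm ((y - x) ^ 2))"
proof (rule ccontr)
  define c where "c = sqrt (norm ((y - x) ^ 2))"
  define d where "d = y - x"
  have c0: "c \<ge> 0" by (simp add: c_def)
  assume neg: "\<not> (spectrum x \<noteq> {} \<and> infdist l (spectrum x) \<le> sqrt (norm ((y - x) ^ 2)))"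
  obtain s where s: "s > c" "\<forall>\<mu>. cmod (\<mu> - l) \<le> s \<longrightarrow> \<mu> \<notin> spectrum x"
  proof (cases "spectrum x = {}")
    case True then show ?thesis using that[of "c + 1"] by auto
  next
    case False
    hence gt: "infdist l (spectrum x) > c" using neg by (auto simp: c_def)
    show ?thesis
    proof (rule that[of "(c + infdist l (spectrum x)) / 2"])
      show "c < (c + infdist l (spectrum x)) / 2" using gt by simp
      show "\<forall>\<mu>. cmod (\<mu> - l) \<le> (c + infdist l (spectrum x)) / 2 \<longrightarrow> \<mu> \<notin> spectrum x"
      proof (intro allI impI notI)
        fix \<mu> assume a: "cmod (\<mu> - l) \<le> (c + infdist l (spectrum x)) / 2" "\<mu> \<in> spectrum x"
        have "infdist l (spectrum x) \<le> dist l \<mu>" using infdist_le[OF a(2)] .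
        also have "\<dots> = cmod (\<mu> - l)" by (simp add: dist_norm norm_minus_commute)
        finally show False using a(1) gt by simp
      qed
    qed
  qed
  have s0: "s > 0" using s c0 by simp
  define X where "X = x - l *\<^sub>C 1"
  have invX: "invertible_elem X" using s(2)[rule_format, of l] s0 by (simp add: X_def spectrum_def)
  define R where "R = binv X"
  have RX: "R * X = 1" "X * R = 1" using binv[OF invX] by (simp_all add: R_def)
  have invR: "invertible_elem R" using RX invertibleI by blast
  define Y where "Y = complex_of_real s *\<^sub>C R"
  have H: "\<forall>\<nu>. cmod \<nu> \<le> 1 \<longrightarrow> invertible_elem (1 - \<nu> *\<^sub>C Y)"
  proof (intro allI impI)
    fix \<nu> :: complex assume \<nu>: "cmod \<nu> \<le> 1"
    have "cmod ((l + \<nu> * s) - l) \<le> s" using \<nu> s0 by (simp add: norm_mult mult_left_le_one_le)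
    hence i: "invertible_elem (x - (l + \<nu> * s) *\<^sub>C 1)" using s(2) by (auto simp: spectrum_def)
    have "R * (x - (l + \<nu> * s) *\<^sub>C 1) = R * X - R * ((\<nu> * s) *\<^sub>C 1)"
      by (simp add: X_def scaleC_add_left right_diff_distrib algebra_simps)
    also have "\<dots> = 1 - \<nu> *\<^sub>C Y" using RX by (simp add: Y_def mult_scaleC_right scaleC_scaleC)
    finally show "invertible_elem (1 - \<nu> *\<^sub>C Y)" using invertible_mult[OF invR i] by simp
  qed
  obtain m where m: "norm (Y ^ (2 ^ m)) < 1" using key_lemma[OF H] by blast
  define N where "N = (2::nat) ^ Suc m"
  have YN: "Y ^ N = (Y ^ (2 ^ m)) ^ 2" by (simp add: N_def power_mult[symmetric] mult.commute)
  have "norm (Y ^ N) \<le> norm (Y ^ (2 ^ m)) ^ 2" unfolding YN by (rule norm_power_ineq)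
  also have "\<dots> < 1" using m by (simp add: power_less_one_iff)
  finally have nYN: "norm (Y ^ N) < 1" .
  have "Y ^ N = (complex_of_real s ^ N) *\<^sub>C R ^ N" by (simp add: Y_def scaleC_power)
  hence nYN2: "s ^ N * norm (R ^ N) < 1" using nYN s0 by (simp add: norm_scaleC norm_power)
  have dN: "d ^ N = (d ^ 2) ^ (2 ^ m)" by (simp add: N_def power_mult[symmetric])
  have "norm (d ^ N) \<le> norm (d ^ 2) ^ (2 ^ m)" unfolding dN by (rule norm_power_ineq)
  also have "\<dots> = (c ^ 2) ^ (2 ^ m)" by (simp add: c_def d_def)
  also have "\<dots> = c ^ N" by (simp add: N_def power_mult[symmetric])
  also have "\<dots> \<le> s ^ N" using c0 s(1) by (intro power_mono) auto
  finally have ndN: "norm (d ^ N) \<le> s ^ N" .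
  have Xd: "X * d = d * X" using xy
    by (simp add: X_def d_def algebra_simps mult_scaleC_left mult_scaleC_right scaleC_diff_right)
  have Rd: "R * d = d * R" unfolding R_def by (rule binv_comm[OF invX Xd])
  have "norm ((R * d) ^ N) = norm (R ^ N * d ^ N)" by (simp add: comm_power_mult[OF Rd])
  also have "\<dots> \<le> norm (R ^ N) * norm (d ^ N)" by (rule norm_mult_ineq)
  also have "\<dots> \<le> norm (R ^ N) * s ^ N" using ndN by (intro mult_left_mono) auto
  also have "\<dots> < 1" using nYN2 by (simp add: mult.commute)
  finally have "invertible_elem (1 + R * d)" by (rule neumann_power)
  hence "invertible_elem (X * (1 + R * d))" using invertible_mult[OF invX] by blast
  moreover have "X * (1 + R * d) = y - l *\<^sub>C 1"
    using RX by (simp add: distrib_left mult.assoc[symmetric] X_def d_def)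
  ultimately show False using l by (simp add: spectrum_def)
qed


theorem proposition2p1:
  fixes a :: "'a::complex_banach_algebra_1" and as :: "nat \<Rightarrow> 'a"
  assumes "\<And>n. as n * a = a * as n"
    and "\<And>n m. as n * as m = as m * as n"
    and "nu_conv as a"
    and "(0::complex) islimpt spectrum a"
  shows "(\<lambda>n. hausdorff_dist (spectrum (as n)) (spectrum a)) \<longlonglongrightarrow> 0"
proof -
  obtain b0 where b0: "b0 \<in> spectrum a"
  proof -
    have "\<exists>y\<in>spectrum a. y \<in> UNIV \<and> y \<noteq> 0"
      by (rule islimptE[OF assms(4) UNIV_I open_UNIV]) blast
    thus ?thesis using that by blast
  qed
  define c where "c n = sqrt (norm ((as n - a) ^ 2))" for n
  have bound: "norm (hausdorff_dist (spectrum (as n)) (spectrum a)) \<le> c n" for n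
  proof -
    let ?A = "spectrum (as n)" and ?B = "spectrum a"
    have sq: "(a - as n) ^ 2 = (as n - a) ^ 2" 
    proof -
      have e: "a - as n = -(as n - a)" by simp
      show ?thesis unfolding e by (rule power2_minus)
    qed
    have h1: "\<forall>l\<in>?A. infdist l ?B \<le> c n"
    proof
      fix l assume "l \<in> ?A"
      thus "infdist l ?B \<le> c n" using spec_incl[of a "as n" l] assms(1)[of n] unfolding c_def by simp
    qed
    have h2: "\<forall>l\<in>?B. ?A \<noteq> {} \<and> infdist l ?A \<le> c n"
    proof
      fix l assume "l \<in> ?B"
      thus "?A \<noteq> {} \<and> infdist l ?A \<le> c n" 
      proof -
        have "?A \<noteq> {} \<and> infdist l ?A \<le> sqrt (norm ((a - as n) ^ 2))"
          using spec_incl[of "as n" a l] assms(1)[of n] \<open>l \<in> ?B\<close> by blast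
        thus ?thesis unfolding sq c_def .
      qed
    qed
    have Ane: "?A \<noteq> {}" using h2 b0 by blast
    have s1: "(SUP l\<in>?A. infdist l ?B) \<le> c n" using h1 Ane by (intro cSUP_least) auto
    have s2: "(SUP l\<in>?B. infdist l ?A) \<le> c n" using h2 b0 by (intro cSUP_least) auto
    have bdd: "bdd_above ((\<lambda>l. infdist l ?A) ` ?B)" using h2 by (intro bdd_aboveI2) auto
    have "0 \<le> infdist b0 ?A" by (rule infdist_nonneg)
    also have "\<dots> \<le> (SUP l\<in>?B. infdist l ?A)" using bdd b0 by (rule cSUP_upper2) simp
    finally have p: "0 \<le> (SUP l\<in>?B. infdist l ?A)" .
    have "hausdorff_dist ?A ?B \<le> c n" unfolding hausdorff_dist_def using s1 s2 by (rule max.boundedI)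
    moreover have "0 \<le> hausdorff_dist ?A ?B" unfolding hausdorff_dist_def using p by (rule max.coboundedI2)
    ultimately show ?thesis by simp
  qed
  have l1: "(\<lambda>n. norm ((as n - a) * a)) \<longlonglongrightarrow> 0" and l2: "(\<lambda>n. norm ((as n - a) * as n)) \<longlonglongrightarrow> 0"
    using assms(3) by (simp_all add: nu_conv_def)
  have "(\<lambda>n. (as n - a) ^ 2) \<longlonglongrightarrow> 0"
  proof (rule Lim_null_comparison)
    show "\<forall>\<^sub>F n in sequentially. norm ((as n - a) ^ 2) \<le> norm ((as n - a) * as n) + norm ((as n - a) * a)"
    proof (intro always_eventually allI)
      fix n
      have "(as n - a) ^ 2 = (as n - a) * as n - (as n - a) * a" by (simp add: power2_eq_square right_diff_distrib)
      thus "norm ((as n - a) ^ 2) \<le> norm ((as n - a) * as n) + norm ((as n - a) * a)"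
        by (simp add: norm_triangle_ineq4)
    qed
    show "(\<lambda>n. norm ((as n - a) * as n) + norm ((as n - a) * a)) \<longlonglongrightarrow> 0"
      using tendsto_add_zero[OF l2 l1] .
  qed
  hence "(\<lambda>n. norm ((as n - a) ^ 2)) \<longlonglongrightarrow> 0" by (rule tendsto_norm_zero)
  hence "(\<lambda>n. sqrt (norm ((as n - a) ^ 2))) \<longlonglongrightarrow> sqrt 0" by (rule tendsto_real_sqrt)
  hence "c \<longlonglongrightarrow> 0" unfolding c_def by simp
  moreover have "\<forall>\<^sub>F n in sequentially. norm (hausdorff_dist (spectrum (as n)) (spectrum a)) \<le> c n"
    using bound by (intro always_eventually allI)
  ultimately show ?thesis by (rule Lim_null_comparison[rotated])
qed

end
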